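(* Let $F,G\in 1+x\,\mathbb Z[[x]]$ be formal power series whose coefficients are congruent modulo $4$ (coefficient by coefficient). If there exists $H\in 1+x\,\mathbb Z[[x]]$ with $H^2=F$, then there exists $H'\in 1+x\,\mathbb Z[[x]]$ with $H'^2=G$. *)

theory Defs
  imports "HOL-Computational_Algebra.Formal_Power_Series" "HOL-Number_Theory.Cong"
begin

end

theory Submission
  imports Defs
begin

function dseq :: "(nat \<Rightarrow> int) \<Rightarrow> (nat \<Rightarrow> int) \<Rightarrow> nat \<Rightarrow> int" where
  "dseq k h n = (if n = 0 then 0 else
     k n - (\<Sum>i\<in>{1..<n}. dseq k h i * (h (n - i) + dseq k h (n - i))))"
  by auto
termination by (relation "measure (\<lambda>(k, h, n). n)") auto

declare dseq.simps[simp del]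

lemma dseq_0: "dseq k h 0 = 0"
  by (simp add: dseq.simps)

lemma dseq_Suc: "n > 0 \<Longrightarrow> dseq k h n =
     k n - (\<Sum>i\<in>{1..<n}. dseq k h i * (h (n - i) + dseq k h (n - i)))"
  by (subst dseq.simps) simp

lemma solve:
  fixes K H :: "int fps"
  assumes "fps_nth K 0 = 0" "fps_nth H 0 = 1"
  defines "D \<equiv> Abs_fps (dseq (fps_nth K) (fps_nth H))"
  shows "D * (H + D) = K" "fps_nth D 0 = 0"
proof -
  show "fps_nth D 0 = 0" by (simp add: D_def dseq_0)
  show "D * (H + D) = K"
  proof (rule fps_ext)
    fix n
    let ?d = "dseq (fps_nth K) (fps_nth H)"
    show "fps_nth (D * (H + D)) n = fps_nth K n"
    proof (cases "n = 0")
      case True thus ?thesis using assms by (simp add: D_def dseq_0 fps_mult_nth)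
    next
      case False
      have "fps_nth (D * (H + D)) n = (\<Sum>i=0..n. ?d i * (fps_nth H (n - i) + ?d (n - i)))"
        by (simp add: D_def fps_mult_nth)
      also have "\<dots> = (\<Sum>i\<in>{0} \<union> {1..<n} \<union> {n}. ?d i * (fps_nth H (n - i) + ?d (n - i)))"
        using False by (intro sum.cong) auto
      also have "\<dots> = ?d n + (\<Sum>i\<in>{1..<n}. ?d i * (fps_nth H (n - i) + ?d (n - i)))"
        using False assms(2) by (subst sum.union_disjoint; auto simp: dseq_0)+
      also have "\<dots> = fps_nth K n" using False by (subst (1) dseq_Suc) auto
      finally show ?thesis .
    qed
  qed
qed

theorem proposition4p2:
  fixes F G :: "int fps"
  assumes "fps_nth F 0 = 1" and "fps_nth G 0 = 1"
    and "\<And>n. [fps_nth F n = fps_nth G n] (mod 4)"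
    and "\<exists>H :: int fps. fps_nth H 0 = 1 \<and> H ^ 2 = F"
  shows "\<exists>H' :: int fps. fps_nth H' 0 = 1 \<and> H' ^ 2 = G"
proof -
  obtain H where H: "fps_nth H 0 = 1" "H ^ 2 = F" using assms(4) by blast
  define K where "K = Abs_fps (\<lambda>n. (fps_nth G n - fps_nth F n) div 4)"
  have dv: "4 dvd (fps_nth G n - fps_nth F n)" for n
    using assms(3)[of n] by (simp add: cong_iff_dvd_diff) (metis dvd_diff_commute)
  have GK: "G = F + 4 * K"
  proof (rule fps_ext)
    fix n
    have "fps_nth (4 * K) n = 4 * fps_nth K n"
      by (metis fps_mult_left_const_nth fps_numeral_fps_const)
    thus "fps_nth G n = fps_nth (F + 4 * K) n"
      using dv[of n] by (simp add: K_def)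
  qed
  have K0: "fps_nth K 0 = 0" using assms(1,2) by (simp add: K_def)
  define D where "D = Abs_fps (dseq (fps_nth K) (fps_nth H))"
  have D: "D * (H + D) = K" "fps_nth D 0 = 0"
    using solve[OF K0 H(1)] unfolding D_def by auto
  have "(H + 2 * D) ^ 2 = H ^ 2 + 4 * (D * (H + D))"
    by (simp add: power2_eq_square algebra_simps)
  also have "\<dots> = G" using GK H(2) D(1) by simp
  finally have sq: "(H + 2 * D) ^ 2 = G" .
  have "fps_nth (2 * D) 0 = 0"
    by (metis D(2) fps_mult_left_const_nth fps_numeral_fps_const mult_zero_right)
  hence "fps_nth (H + 2 * D) 0 = 1" using H(1) by simp
  with sq show ?thesis by blast
qed

end
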